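(* Let $(X,d_X)$ and $(\Lambda,d_\Lambda)$ be complete metric spaces and, for each $\lambda\in\Lambda$, let $S_\lambda(\cdot,\cdot)$ be a process on $X$. Suppose: (L1) for every $\lambda\in\Lambda$, $S_\lambda(\cdot,\cdot)$ has a pullback attractor $\mathscr A_\lambda(\cdot)=\{\mathscr A_\lambda(t):t\in\mathbb R\}$; and that one of the following two sets of hypotheses holds: (i) there is a compact set $D\subseteq X$ with $\mathscr A_\lambda(t)\subseteq D$ for every $\lambda\in\Lambda$ and every $t\in\mathbb R$, and for every $s\in\mathbb R$ and $t\ge s$ the map $\lambda\mapsto S_\lambda(t,s)x$ is continuous, uniformly for $x$ in compact subsets of $X$; or (ii) there is a bounded set $D\subseteq X$ with $\mathscr A_\lambda(t)\subseteq D$ for every $\lambda\in\Lambda$ and every $t\in\mathbb R$; for every $s\in\mathbb R$ and $t\ge s$ the map $\lambda\mapsto S_\lambda(t,s)x$ is continuous, uniformly for $x$ in bounded subsets of $X$; and for any $\lambda_0\in\Lambda$ and $t\in\mathbb R$ there exists $\delta>0$ such that $\overline{\bigcup_{\lambda\in B_\Lambda(\lambda_0,\delta)}\mathscr A_\lambda(t)}$ is compact, where $B_\Lambda(\lambda_0,\delta)=\{\lambda\in\Lambda: d_\Lambda(\lambda,\lambda_0)<\delta\}$. Then there exists a residual set $\Lambda_*\subseteq\Lambda$ such that for every $t\in\mathbb R$ the map $\lambda\mapsto\mathscr A_\lambda(t)$ (into the space of nonempty closed bounded subsets of $X$ with the Hausdorff metric) is continuous at each $\lambda\in\Lambda_*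$.
   Context: A process on a complete metric space $(X,d_X)$ is a two-parameter family of maps $S(t,s):X\to X$, $s\in\mathbb R$, $t\ge s$, such that $S(t,t)=\mathrm{id}$, $S(t,\tau)S(\tau,s)=S(t,s)$ for all $t\ge\tau\ge s$, and $S(t,s)x$ is continuous in $(x,t,s)$. For subsets $A,C$ of a metric space $Y$, the Hausdorff semi-distance is $\rho_Y(A,C)=\sup_{a\in A}\inf_{c\in C}d_Y(a,c)$ and the Hausdorff distance is $\Delta_Y(A,C)=\max(\rho_Y(A,C),\rho_Y(C,A))$; $CB(Y)$ denotes the set of nonempty closed bounded subsets of $Y$ with metric $\Delta_Y$. A family of compact sets $\mathscr A(\cdot)=\{\mathscr A(t):t\in\mathbb R\}$ is the pullback attractor of the process $S$ if (A1) $S(t,s)\mathscr A(s)=\mathscr A(t)$ for all $t\ge s$; (A2) for every bounded $B\subseteq X$ and $t\in\mathbb R$, $\rho_X(S(t,s)B,\mathscr A(t))\to0$ as $s\to-\infty$; (A3) if $C(\cdot)$ is any other family of compact sets satisfying (A1) and (A2) then $\mathscr A(t)\subseteq C(t)$ for all $t$. A subset of $\Lambda$ is residual if its complement is a countable union of nowhere dense sets. *)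

theory Defs
  imports "HOL-Analysis.Analysis" "HOL-Library.Extended_Real"
begin

text \<open>Hausdorff semi-distance, with values in the extended reals
  (so that e.g. the semi-distance to the empty set is +infinity; the
  semi-distance from the empty set is 0 by convention).\<close>
definition hsemidist :: "'a::metric_space set \<Rightarrow> 'a set \<Rightarrow> ereal" where
  "hsemidist A C = Sup (insert 0 ((\<lambda>a. Inf ((\<lambda>c. ereal (dist a c)) ` C)) ` A))"

definition hausdist :: "'a::metric_space set \<Rightarrow> 'a set \<Rightarrow> ereal" where
  "hausdist A C = max (hsemidist A C) (hsemidist C A)"

definition is_process :: "(real \<Rightarrow> real \<Rightarrow> 'a::metric_space \<Rightarrow> 'a) \<Rightarrow> bool" where
  "is_process S \<longleftrightarrow>
     (\<forall>t. S t t = id) \<and>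
     (\<forall>t \<tau> s. s \<le> \<tau> \<and> \<tau> \<le> t \<longrightarrow> S t \<tau> \<circ> S \<tau> s = S t s) \<and>
     continuous_on {(x, t, s). s \<le> t} (\<lambda>(x, t, s). S t s x)"

definition pullback_attractor ::
  "(real \<Rightarrow> real \<Rightarrow> 'a::metric_space \<Rightarrow> 'a) \<Rightarrow> (real \<Rightarrow> 'a set) \<Rightarrow> bool" where
  "pullback_attractor S A \<longleftrightarrow>
     (\<forall>t. compact (A t)) \<and>
     (\<forall>t s. s \<le> t \<longrightarrow> S t s ` A s = A t) \<and>
     (\<forall>B t. bounded B \<longrightarrow> ((\<lambda>s. hsemidist (S t s ` B) (A t)) \<longlongrightarrow> 0) at_bot) \<and>
     (\<forall>C. (\<forall>t. compact (C t)) \<and>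
          (\<forall>t s. s \<le> t \<longrightarrow> S t s ` C s = C t) \<and>
          (\<forall>B t. bounded B \<longrightarrow> ((\<lambda>s. hsemidist (S t s ` B) (C t)) \<longlongrightarrow> 0) at_bot)
          \<longrightarrow> (\<forall>t. A t \<subseteq> C t))"

definition nowhere_dense :: "'a::topological_space set \<Rightarrow> bool" where
  "nowhere_dense N \<longleftrightarrow> interior (closure N) = {}"

definition residual :: "'a::topological_space set \<Rightarrow> bool" where
  "residual L \<longleftrightarrow> (\<exists>F. countable F \<and> (\<forall>N\<in>F. nowhere_dense N) \<and> - L = \<Union>F)"

end

theory Submission
  imports Defs
begin


definition clo :: "'a::metric_space set \<Rightarrow> 'a set \<Rightarrow> real \<Rightarrow> bool" where
  "clo A C e \<longleftrightarrow> (\<forall>a\<in>A. \<exists>c\<in>C. dist a c < e) \<and> (\<forall>c\<in>C. \<exists>a\<in>A. dist a c < e)"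

lemma clo_sym: "clo A C e \<Longrightarrow> clo C A e"
  unfolding clo_def by (metis dist_commute)

lemma clo_mono: "clo A C e \<Longrightarrow> e \<le> e' \<Longrightarrow> clo A C e'"
  unfolding clo_def by (meson less_le_trans)

lemma clo_trans: "clo A B e1 \<Longrightarrow> clo B C e2 \<Longrightarrow> clo A C (e1 + e2)"
  unfolding clo_def
proof (intro conjI ballI)
  fix a assume h: "(\<forall>a\<in>A. \<exists>c\<in>B. dist a c < e1) \<and> (\<forall>c\<in>B. \<exists>a\<in>A. dist a c < e1)"
    "(\<forall>a\<in>B. \<exists>c\<in>C. dist a c < e2) \<and> (\<forall>c\<in>C. \<exists>a\<in>B. dist a c < e2)" "a \<in> A"
  then obtain b where b: "b \<in> B" "dist a b < e1" by blast
  then obtain c where c: "c \<in> C" "dist b c < e2" using h by blast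
  have "dist a c < e1 + e2" using b c dist_triangle[of a c b] by linarith
  then show "\<exists>c\<in>C. dist a c < e1 + e2" using c by blast
next
  fix c assume h: "(\<forall>a\<in>A. \<exists>c\<in>B. dist a c < e1) \<and> (\<forall>c\<in>B. \<exists>a\<in>A. dist a c < e1)"
    "(\<forall>a\<in>B. \<exists>c\<in>C. dist a c < e2) \<and> (\<forall>c\<in>C. \<exists>a\<in>B. dist a c < e2)" "c \<in> C"
  then obtain b where b: "b \<in> B" "dist b c < e2" by blast
  then obtain a where a: "a \<in> A" "dist a b < e1" using h by blast
  have "dist a c < e1 + e2" using b a dist_triangle[of a c b] by linarith
  then show "\<exists>a\<in>A. dist a c < e1 + e2" using a by blast
qed

lemma hsemidist_nonneg: "0 \<le> hsemidist A C"
  unfolding hsemidist_def by (simp add: Sup_upper)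

lemma hausdist_nonneg: "0 \<le> hausdist A C"
  unfolding hausdist_def using hsemidist_nonneg[of A C] by (simp add: le_max_iff_disj)

lemma hsemidist_le: "(\<forall>a\<in>A. \<exists>c\<in>C. dist a c < e) \<Longrightarrow> 0 \<le> e \<Longrightarrow> hsemidist A C \<le> ereal e"
  unfolding hsemidist_def
proof (rule Sup_least)
  fix x assume h: "\<forall>a\<in>A. \<exists>c\<in>C. dist a c < e" "0 \<le> e"
    "x \<in> insert 0 ((\<lambda>a. Inf ((\<lambda>c. ereal (dist a c)) ` C)) ` A)"
  then show "x \<le> ereal e"
  proof (cases "x = 0")
    case False
    then obtain a where a: "a \<in> A" "x = Inf ((\<lambda>c. ereal (dist a c)) ` C)" using h by auto
    then obtain c where "c \<in> C" "dist a c < e" using h by blast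
    then show ?thesis using a by (metis INF_lower2 ereal_less_eq(3) less_imp_le)
  qed (simp add: h)
qed

lemma hsemidist_lt: "hsemidist A C < ereal e \<Longrightarrow> a \<in> A \<Longrightarrow> \<exists>c\<in>C. dist a c < e"
proof -
  assume h: "hsemidist A C < ereal e" "a \<in> A"
  have "Inf ((\<lambda>c. ereal (dist a c)) ` C) \<le> hsemidist A C"
    unfolding hsemidist_def by (rule Sup_upper) (use h in auto)
  then have "Inf ((\<lambda>c. ereal (dist a c)) ` C) < ereal e" using h by simp
  then show ?thesis by (auto simp: INF_less_iff)
qed

lemma clo_hausdist: "clo A C e \<Longrightarrow> 0 \<le> e \<Longrightarrow> hausdist A C \<le> ereal e"
  unfolding hausdist_def clo_def
  by (metis (no_types, lifting) dist_commute hsemidist_le max.bounded_iff)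

lemma tendsto_hausdist:
  assumes "\<And>e. e > 0 \<Longrightarrow> \<exists>\<delta>>0. \<forall>m. dist m l0 < \<delta> \<longrightarrow> clo (A m) C e"
  shows "((\<lambda>m. hausdist (A m) C) \<longlongrightarrow> 0) (at l0)"
proof (rule order_tendstoI)
  fix a :: ereal assume "a < 0"
  then show "eventually (\<lambda>m. a < hausdist (A m) C) (at l0)"
    using hausdist_nonneg by (metis (no_types, lifting) always_eventually less_le_trans)
next
  fix a :: ereal assume a: "0 < a"
  obtain e where e: "0 < e" "ereal e < a"
  proof (cases a)
    case (real r) then show ?thesis using a that[of "r/2"] by auto
  next
    case PInf then show ?thesis using that[of 1] by auto
  next
    case MInf then show ?thesis using a by auto
  qed
  obtain d where d: "d > 0" "\<forall>m. dist m l0 < d \<longrightarrow> clo (A m) C e" using assms e by blast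
  show "eventually (\<lambda>m. hausdist (A m) C < a) (at l0)"
    unfolding eventually_at
    using d e clo_hausdist by (metis le_less_trans less_imp_le)
qed

lemma baire_helper:
  fixes F :: "nat \<Rightarrow> 'a::complete_space set"
  assumes cl: "\<And>N. closed (F N)" and cov: "(\<Union>N. F N) = UNIV"
  shows "interior (- (\<Union>N. interior (F N))) = {}"
proof -
  define C where "C = - (\<Union>N. interior (F N))"
  have cC: "closed C" unfolding C_def by (auto intro!: open_Union)
  have "euclidean interior_of \<Union>(range (\<lambda>N. F N \<inter> C)) = {}"
  proof (rule Baire_category_alt)
    show "completely_metrizable_space (euclidean::'a topology) \<or> locally_compact_space (euclidean::'a topology) \<and> regular_space (euclidean::'a topology)"
      by (rule disjI1, rule completely_metrizable_space_euclidean)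
    show "countable (range (\<lambda>N. F N \<inter> C))" by simp
    fix T assume "T \<in> range (\<lambda>N. F N \<inter> C)"
    then obtain N where T: "T = F N \<inter> C" by auto
    show "closedin euclidean T \<and> euclidean interior_of T = {}"
    proof
      show "closedin euclidean T" using T cl cC closed_closedin by blast
      have "interior T \<subseteq> interior (F N) \<inter> interior C" using T by (simp add: interior_Int)
      also have "\<dots> \<subseteq> interior (F N) \<inter> C" using interior_subset by blast
      also have "\<dots> = {}" unfolding C_def by blast
      finally show "euclidean interior_of T = {}" by (simp add: euclidean_interior_of)
    qed
  qed
  moreover have "\<Union>(range (\<lambda>N. F N \<inter> C)) = C" using cov by auto
  ultimately have "interior C = {}" by (metis euclidean_interior_of)
  then show ?thesis unfolding C_def .
qed



lemma main:
  fixes S :: "'l::complete_space \<Rightarrow> real \<Rightarrow> real \<Rightarrow> 'a::complete_space \<Rightarrow> 'a"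
    and A :: "'l \<Rightarrow> real \<Rightarrow> 'a set"
  assumes proc: "\<And>l. is_process (S l)"
    and L1: "\<And>l. pullback_attractor (S l) (A l)"
    and bdd: "bounded D" and sub: "\<And>l t. A l t \<subseteq> D"
    and unif: "\<And>s t l0 \<epsilon>. s \<le> t \<Longrightarrow> \<epsilon> > 0 \<Longrightarrow> \<exists>\<delta>>0. \<forall>m. dist m l0 < \<delta> \<longrightarrow>
                     (\<forall>x\<in>D. dist (S m t s x) (S l0 t s x) < \<epsilon>)"
    and cpt: "\<And>l0 t. \<exists>\<delta>>0. \<exists>K. compact K \<and> (\<forall>m\<in>ball l0 \<delta>. A m t \<subseteq> K)"
  shows "\<exists>Ls. residual Ls \<and>
           (\<forall>t. \<forall>l0\<in>Ls. ((\<lambda>m. hausdist (A m t) (A l0 t)) \<longlongrightarrow> 0) (at l0))"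
proof -
  define f where "f t n l = S l t (t - real n) ` D" for t n l
  have inv: "S l t s ` A l s = A l t" if "s \<le> t" for l t s
    using L1[of l] that unfolding pullback_attractor_def by blast
  have attr: "((\<lambda>s. hsemidist (S l t s ` D) (A l t)) \<longlongrightarrow> 0) at_bot" for l t
    using L1[of l] bdd unfolding pullback_attractor_def by blast
  have conv: "\<exists>N. \<forall>n\<ge>N. clo (f t n l) (A l t) e" if e: "e > 0" for l t e
  proof -
    have "eventually (\<lambda>s. hsemidist (S l t s ` D) (A l t) < ereal e) at_bot"
      using order_tendstoD(2)[OF attr[of l t]] e by simp
    then obtain b where b: "\<And>s. s \<le> b \<Longrightarrow> hsemidist (S l t s ` D) (A l t) < ereal e"
      unfolding eventually_at_bot_linorder by blast
    define N where "N = nat \<lceil>t - b\<rceil>"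
    have "clo (f t n l) (A l t) e" if n: "n \<ge> N" for n
    proof -
      have "t - b \<le> real N" unfolding N_def by linarith
      then have "t - real n \<le> b" using n by (smt (verit) of_nat_mono)
      then have h: "hsemidist (f t n l) (A l t) < ereal e" using b unfolding f_def by blast
      have s1: "\<forall>a\<in>f t n l. \<exists>c\<in>A l t. dist a c < e" using hsemidist_lt[OF h] by blast
      have "A l t \<subseteq> f t n l"
        using inv[of "t - real n" t l] sub[of l "t - real n"] unfolding f_def by auto
      then have "\<forall>c\<in>A l t. \<exists>a\<in>f t n l. dist a c < e" using e by (metis dist_self subsetD)
      then show ?thesis using s1 unfolding clo_def by blast
    qed
    then show ?thesis by blast
  qed
  have fcont: "\<exists>\<delta>>0. \<forall>m. dist m l0 < \<delta> \<longrightarrow> clo (f t n m) (f t n l0) e" if e: "e > 0" for t n l0 e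
  proof -
    obtain \<delta> where d: "\<delta> > 0" "\<forall>m. dist m l0 < \<delta> \<longrightarrow> (\<forall>x\<in>D. dist (S m t (t - real n) x) (S l0 t (t - real n) x) < e)"
      using unif[of "t - real n" t e l0] e by auto
    have "clo (f t n m) (f t n l0) e" if m: "dist m l0 < \<delta>" for m
      unfolding clo_def f_def
    proof (intro conjI ballI)
      fix a assume "a \<in> S m t (t - real n) ` D"
      then obtain x where x: "x \<in> D" "a = S m t (t - real n) x" by auto
      then show "\<exists>c\<in>S l0 t (t - real n) ` D. dist a c < e" using d m by blast
    next
      fix c assume "c \<in> S l0 t (t - real n) ` D"
      then obtain x where x: "x \<in> D" "c = S l0 t (t - real n) x" by auto
      then show "\<exists>a\<in>S m t (t - real n) ` D. dist a c < e" using d m by blast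
    qed
    then show ?thesis using d by blast
  qed
  define E where "E t e N = {l. \<forall>n\<ge>N. \<forall>n'\<ge>N. clo (f t n l) (f t n' l) e}" for t e N
  have Ecover: "(\<Union>N. closure (E t e N)) = UNIV" if e: "e > 0" for t e
  proof -
    have "l \<in> (\<Union>N. E t e N)" for l
    proof -
      obtain N where N: "\<forall>n\<ge>N. clo (f t n l) (A l t) (e/2)" using conv[where e="e/2" and l=l and t=t] e by auto
      have "clo (f t n l) (f t n' l) e" if "n \<ge> N" "n' \<ge> N" for n n'
        using clo_trans[OF N[rule_format, OF that(1)] clo_sym[OF N[rule_format, OF that(2)]]] by simp
      then show ?thesis unfolding E_def by blast
    qed
    then show ?thesis using closure_subset by blast
  qed
  have Eclos: "clo (f t n l) (f t n' l) (2*e)"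
    if e: "e > 0" and l: "l \<in> closure (E t e N)" and nn: "n \<ge> N" "n' \<ge> N" for t e N l n n'
  proof -
    obtain d1 where d1: "d1 > 0" "\<forall>m. dist m l < d1 \<longrightarrow> clo (f t n m) (f t n l) (e/2)"
      using fcont[of "e/2" l t n] e by auto
    obtain d2 where d2: "d2 > 0" "\<forall>m. dist m l < d2 \<longrightarrow> clo (f t n' m) (f t n' l) (e/2)"
      using fcont[of "e/2" l t n'] e by auto
    obtain y where y: "y \<in> E t e N" "dist y l < min d1 d2"
      using l d1 d2 unfolding closure_approachable by (metis min_less_iff_conj)
    have "clo (f t n y) (f t n' y) e" using y nn unfolding E_def by blast
    moreover have c1: "clo (f t n l) (f t n y) (e/2)" using clo_sym d1(2) y by auto
    ultimately have "clo (f t n l) (f t n' y) (e/2 + e)" using clo_trans by blast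
    moreover have c2: "clo (f t n' y) (f t n' l) (e/2)" using d2(2) y by auto
    ultimately have "clo (f t n l) (f t n' l) (e/2 + e + e/2)" using clo_trans by blast
    then show ?thesis by (simp add: field_simps)
  qed
  define U where "U t e = (\<Union>N. interior (closure (E t e N)))" for t e
  have Uopen: "open (U t e)" for t e unfolding U_def by auto
  have Uint: "interior (- U t e) = {}" if "e > 0" for t e
    unfolding U_def by (rule baire_helper) (auto simp: Ecover[OF that])
  have Ugood: "\<exists>\<delta>>0. \<forall>m. dist m l0 < \<delta> \<longrightarrow> clo (A m t) (A l0 t) (7*e)"
    if e: "e > 0" and l0: "l0 \<in> U t e" for t e l0
  proof -
    obtain N where N: "l0 \<in> interior (closure (E t e N))" using l0 unfolding U_def by blast
    then obtain r where r: "r > 0" "ball l0 r \<subseteq> closure (E t e N)"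
      using open_contains_ball by (metis open_interior interior_subset subset_trans)
    have near: "clo (f t N m) (A m t) (3*e)" if m: "m \<in> ball l0 r" for m
    proof -
      obtain N' where N': "\<forall>n\<ge>N'. clo (f t n m) (A m t) e" using conv e by blast
      have "clo (f t N m) (f t (max N N') m) (2*e)"
        using Eclos[OF e, where t=t and N=N and n=N and n'="max N N'" and l=m] r m by auto
      moreover have "clo (f t (max N N') m) (A m t) e" using N' by simp
      ultimately have "clo (f t N m) (A m t) (2*e + e)" by (rule clo_trans)
      then show ?thesis by simp
    qed
    obtain d where d: "d > 0" "\<forall>m. dist m l0 < d \<longrightarrow> clo (f t N m) (f t N l0) e"
      using fcont e by blast
    have "clo (A m t) (A l0 t) (7*e)" if m: "dist m l0 < min r d" for m
    proof -
      have "m \<in> ball l0 r" using m by (simp add: dist_commute)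
      then have "clo (A m t) (f t N m) (3*e)" using near clo_sym by blast
      moreover have "clo (f t N m) (f t N l0) e" using d m by simp
      ultimately have "clo (A m t) (f t N l0) (3*e + e)" by (rule clo_trans)
      moreover have "clo (f t N l0) (A l0 t) (3*e)" using near[of l0] r by simp
      ultimately have "clo (A m t) (A l0 t) (3*e + e + 3*e)" by (rule clo_trans)
      then show ?thesis by simp
    qed
    then show ?thesis using r d by (metis min_less_iff_conj)
  qed
  define Ls where "Ls = (\<Inter>z k. U (real_of_int z) (1 / real (Suc k)))"
  have res: "residual Ls"
    unfolding residual_def
  proof (intro exI conjI ballI)
    let ?F = "(\<lambda>(z::int, k::nat). - U (real_of_int z) (1 / real (Suc k))) ` UNIV"
    show "countable ?F" by simp
    show "- Ls = \<Union>?F" unfolding Ls_def by auto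
    fix N assume "N \<in> ?F"
    then obtain z k where N: "N = - U (real_of_int z) (1 / real (Suc k))" by auto
    have "closure N = N" unfolding N using Uopen by (simp add: closed_Compl)
    then show "nowhere_dense N" unfolding nowhere_dense_def using Uint N by simp
  qed
  have intc: "\<exists>\<delta>>0. \<forall>m. dist m l0 < \<delta> \<longrightarrow> clo (A m (real_of_int z)) (A l0 (real_of_int z)) e"
    if l0: "l0 \<in> Ls" and e: "e > 0" for l0 z e
  proof -
    have "e / 7 > 0" using e by simp
    then obtain k where "inverse (real (Suc k)) < e / 7" using reals_Archimedean by blast
    then have k: "1 / real (Suc k) < e / 7" by (simp add: inverse_eq_divide)
    have "l0 \<in> U (real_of_int z) (1 / real (Suc k))" using l0 unfolding Ls_def by blast
    from Ugood[OF _ this] obtain d where "d > 0" "\<forall>m. dist m l0 < d \<longrightarrow> clo (A m (real_of_int z)) (A l0 (real_of_int z)) (7 * (1 / real (Suc k)))"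
      by auto
    moreover have "7 * (1 / real (Suc k)) \<le> e" using k by simp
    ultimately show ?thesis using clo_mono by blast
  qed
  have allc: "\<exists>\<delta>>0. \<forall>m. dist m l0 < \<delta> \<longrightarrow> clo (A m t) (A l0 t) e"
    if l0: "l0 \<in> Ls" and e: "e > 0" for l0 t e
  proof -
    define q where "q = real_of_int \<lfloor>t\<rfloor>"
    have qt: "q \<le> t" unfolding q_def by simp
    obtain d1 K where d1: "d1 > 0" "compact K" "\<forall>m\<in>ball l0 d1. A m q \<subseteq> K" using cpt[of l0 q] by blast
    have "continuous_on {(x, t, s). s \<le> t} (\<lambda>(x, t, s). S l0 t s x)"
      using proc[of l0] unfolding is_process_def by blast
    then have "continuous_on UNIV (\<lambda>x. (\<lambda>(x, t, s). S l0 t s x) (x, t, q))"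
      by (rule continuous_on_compose2) (auto intro!: continuous_intros simp: qt)
    then have cU: "continuous_on UNIV (S l0 t q)" by simp
    have "continuous_on K (S l0 t q)" by (rule continuous_on_subset[OF cU]) simp
    then have "uniformly_continuous_on K (S l0 t q)"
      using d1 compact_uniformly_continuous by blast
    then obtain \<eta> where eta: "\<eta> > 0" "\<forall>x\<in>K. \<forall>x'\<in>K. dist x' x < \<eta> \<longrightarrow> dist (S l0 t q x') (S l0 t q x) < e/2"
      unfolding uniformly_continuous_on_def using e by (meson half_gt_zero)
    obtain d2 where d2: "d2 > 0" "\<forall>m. dist m l0 < d2 \<longrightarrow> (\<forall>x\<in>D. dist (S m t q x) (S l0 t q x) < e/2)"
      using unif[OF qt, of "e/2" l0] e by auto
    obtain d3 where d3: "d3 > 0" "\<forall>m. dist m l0 < d3 \<longrightarrow> clo (A m q) (A l0 q) \<eta>"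
      using intc[OF l0 eta(1)] unfolding q_def by blast
    have "clo (A m t) (A l0 t) e" if m: "dist m l0 < min d1 (min d2 d3)" for m
    proof -
      have mK: "A m q \<subseteq> K" using d1 m by (simp add: dist_commute)
      have lK: "A l0 q \<subseteq> K" using d1 by simp
      have c: "clo (A m q) (A l0 q) \<eta>" using d3 m by simp
      have key: "dist (S m t q x) (S l0 t q y) < e" if x: "x \<in> A m q" and y: "y \<in> A l0 q"
        and xy: "dist x y < \<eta>" for x y
      proof -
        have "dist (S m t q x) (S l0 t q x) < e/2" using d2(2) m x sub[of m q] by auto
        moreover have "dist (S l0 t q x) (S l0 t q y) < e/2"
          using eta(2) x y mK lK xy by (metis dist_commute subsetD)
        ultimately show ?thesis using dist_triangle[of "S m t q x" "S l0 t q y" "S l0 t q x"] by linarith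
      qed
      have Am: "A m t = S m t q ` A m q" and Al: "A l0 t = S l0 t q ` A l0 q" using inv qt by auto
      show ?thesis unfolding clo_def Am Al
      proof (intro conjI ballI)
        fix a assume "a \<in> S m t q ` A m q"
        then obtain x where x: "x \<in> A m q" "a = S m t q x" by auto
        then obtain y where "y \<in> A l0 q" "dist x y < \<eta>" using c unfolding clo_def by blast
        then show "\<exists>c\<in>S l0 t q ` A l0 q. dist a c < e" using key x by blast
      next
        fix c assume "c \<in> S l0 t q ` A l0 q"
        then obtain y where y: "y \<in> A l0 q" "c = S l0 t q y" by auto
        then obtain x where "x \<in> A m q" "dist x y < \<eta>" using c unfolding clo_def by blast
        then show "\<exists>a\<in>S m t q ` A m q. dist a c < e" using key y by blast
      qed
    qed
    then show ?thesis using d1 d2 d3 by (metis min_less_iff_conj)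
  qed
  have "\<forall>t. \<forall>l0\<in>Ls. ((\<lambda>m. hausdist (A m t) (A l0 t)) \<longlongrightarrow> 0) (at l0)"
  proof (intro allI ballI)
    fix t l0 assume "l0 \<in> Ls"
    then show "((\<lambda>m. hausdist (A m t) (A l0 t)) \<longlongrightarrow> 0) (at l0)"
      by (intro tendsto_hausdist allc)
  qed
  then show ?thesis using res by blast
qed



theorem theorem3p3:
  fixes S :: "'l::complete_space \<Rightarrow> real \<Rightarrow> real \<Rightarrow> 'a::complete_space \<Rightarrow> 'a"
    and A :: "'l \<Rightarrow> real \<Rightarrow> 'a set"
  assumes proc: "\<And>l. is_process (S l)"
    and L1: "\<And>l. pullback_attractor (S l) (A l)"
    and hyp: "(\<exists>D. compact D \<and> (\<forall>l t. A l t \<subseteq> D) \<and>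
               (\<forall>s t K l0 \<epsilon>. s \<le> t \<and> compact K \<and> \<epsilon> > 0 \<longrightarrow>
                  (\<exists>\<delta>>0. \<forall>m. dist m l0 < \<delta> \<longrightarrow>
                     (\<forall>x\<in>K. dist (S m t s x) (S l0 t s x) < \<epsilon>))))
            \<or> (\<exists>D. bounded D \<and> (\<forall>l t. A l t \<subseteq> D) \<and>
               (\<forall>s t K l0 \<epsilon>. s \<le> t \<and> bounded K \<and> \<epsilon> > 0 \<longrightarrow>
                  (\<exists>\<delta>>0. \<forall>m. dist m l0 < \<delta> \<longrightarrow>
                     (\<forall>x\<in>K. dist (S m t s x) (S l0 t s x) < \<epsilon>))) \<and>
               (\<forall>l0 t. \<exists>\<delta>>0. compact (closure (\<Union>m\<in>ball l0 \<delta>. A m t))))"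
  shows "\<exists>Ls. residual Ls \<and>
           (\<forall>t. \<forall>l0\<in>Ls. ((\<lambda>m. hausdist (A m t) (A l0 t)) \<longlongrightarrow> 0) (at l0))"

proof -
  from hyp show ?thesis
  proof
    assume "\<exists>D. compact D \<and> (\<forall>l t. A l t \<subseteq> D) \<and>
               (\<forall>s t K l0 \<epsilon>. s \<le> t \<and> compact K \<and> \<epsilon> > 0 \<longrightarrow>
                  (\<exists>\<delta>>0. \<forall>m. dist m l0 < \<delta> \<longrightarrow>
                     (\<forall>x\<in>K. dist (S m t s x) (S l0 t s x) < \<epsilon>)))"
    then obtain D where D: "compact D" "\<forall>l t. A l t \<subseteq> D"
      "\<forall>s t K l0 \<epsilon>. s \<le> t \<and> compact K \<and> \<epsilon> > 0 \<longrightarrow>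
                  (\<exists>\<delta>>0. \<forall>m. dist m l0 < \<delta> \<longrightarrow>
                     (\<forall>x\<in>K. dist (S m t s x) (S l0 t s x) < \<epsilon>))" by (elim exE conjE) (rule that)
    show ?thesis
    proof (rule main[OF proc L1, of D])
      show "bounded D" using D(1) by (rule compact_imp_bounded)
      show "\<And>l t. A l t \<subseteq> D" using D(2) by blast
      show "\<And>s t l0 \<epsilon>. s \<le> t \<Longrightarrow> \<epsilon> > 0 \<Longrightarrow> \<exists>\<delta>>0. \<forall>m. dist m l0 < \<delta> \<longrightarrow>
                     (\<forall>x\<in>D. dist (S m t s x) (S l0 t s x) < \<epsilon>)"
        using D(1,3) by simp
      fix l0 t
      show "\<exists>\<delta>>0. \<exists>K. compact K \<and> (\<forall>m\<in>ball l0 \<delta>. A m t \<subseteq> K)"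
      proof (intro exI conjI)
        show "compact D" using D(1) .
        show "\<forall>m\<in>ball l0 1. A m t \<subseteq> D" using D(2) by blast
      qed simp
    qed
  next
    assume "\<exists>D. bounded D \<and> (\<forall>l t. A l t \<subseteq> D) \<and>
               (\<forall>s t K l0 \<epsilon>. s \<le> t \<and> bounded K \<and> \<epsilon> > 0 \<longrightarrow>
                  (\<exists>\<delta>>0. \<forall>m. dist m l0 < \<delta> \<longrightarrow>
                     (\<forall>x\<in>K. dist (S m t s x) (S l0 t s x) < \<epsilon>))) \<and>
               (\<forall>l0 t. \<exists>\<delta>>0. compact (closure (\<Union>m\<in>ball l0 \<delta>. A m t)))"
    then obtain D where D: "bounded D" "\<forall>l t. A l t \<subseteq> D"
      "\<forall>s t K l0 \<epsilon>. s \<le> t \<and> bounded K \<and> \<epsilon> > 0 \<longrightarrow>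
                  (\<exists>\<delta>>0. \<forall>m. dist m l0 < \<delta> \<longrightarrow>
                     (\<forall>x\<in>K. dist (S m t s x) (S l0 t s x) < \<epsilon>))"
      "\<forall>l0 t. \<exists>\<delta>>0. compact (closure (\<Union>m\<in>ball l0 \<delta>. A m t))" by (elim exE conjE) (rule that)
    show ?thesis
    proof (rule main[OF proc L1, of D])
      show "bounded D" using D(1) .
      show "\<And>l t. A l t \<subseteq> D" using D(2) by blast
      show "\<And>s t l0 \<epsilon>. s \<le> t \<Longrightarrow> \<epsilon> > 0 \<Longrightarrow> \<exists>\<delta>>0. \<forall>m. dist m l0 < \<delta> \<longrightarrow>
                     (\<forall>x\<in>D. dist (S m t s x) (S l0 t s x) < \<epsilon>)"
        using D(1,3) by simp
      fix l0 t
      obtain \<delta> where d: "\<delta> > 0" "compact (closure (\<Union>m\<in>ball l0 \<delta>. A m t))" using D(4) by blast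
      have sub2: "A m t \<subseteq> closure (\<Union>m\<in>ball l0 \<delta>. A m t)" if "m \<in> ball l0 \<delta>" for m
        by (rule subset_trans[OF _ closure_subset]) (use that in blast)
      show "\<exists>\<delta>>0. \<exists>K. compact K \<and> (\<forall>m\<in>ball l0 \<delta>. A m t \<subseteq> K)"
      proof (intro exI conjI ballI)
        show "\<delta> > 0" using d(1) .
        show "compact (closure (\<Union>m\<in>ball l0 \<delta>. A m t))" using d(2) .
      qed (rule sub2)
    qed
  qed
qed

end
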